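(* Let $A$ be a finite abelian group with at least $3$ elements and let $S_1,\ldots,S_k$ be a distinct difference system in $A$. Call a subset of $A$ a basis if it has $3$ elements and is not a translate of a subset of any $S_i$. This yields a simple rank $3$ $A$-invariant matroid structure on $A$.
   Context: Subsets $S_1,\ldots,S_k$ of an abelian group $A$ form a distinct difference system if: (i) for any $i,j$ and any $x,y \in S_i$, $z,w \in S_j$ with $x \neq y$ and $z \neq w$, the equation $x-y=z-w$ implies $x=z$ and $y=w$; (ii) each $S_i$ contains $0$ and at least one other element; (iii) $S_i \cap S_j = \{0\}$ for $i \neq j$. A translate of $T$ is a set $\{t+a : t\in T\}$, $a \in A$. $A$ acts on itself by translation; a matroid on $A$ is $A$-invariant if translates of bases are bases. A matroid is simple if every circuit has at least three elements. *)

theory Defs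
  imports Main
begin

definition translate :: "'a::ab_group_add set \<Rightarrow> 'a \<Rightarrow> 'a set" where
  "translate T a = (\<lambda>t. t + a) ` T"

definition distinct_difference_system :: "nat \<Rightarrow> (nat \<Rightarrow> 'a::ab_group_add set) \<Rightarrow> bool" where
  "distinct_difference_system k S \<longleftrightarrow>
     (\<forall>i\<in>{1..k}. \<forall>j\<in>{1..k}. \<forall>x\<in>S i. \<forall>y\<in>S i. \<forall>z\<in>S j. \<forall>w\<in>S j.
        x \<noteq> y \<and> z \<noteq> w \<and> x - y = z - w \<longrightarrow> x = z \<and> y = w) \<and>
     (\<forall>i\<in>{1..k}. 0 \<in> S i \<and> (\<exists>x\<in>S i. x \<noteq> 0)) \<and>
     (\<forall>i\<in>{1..k}. \<forall>j\<in>{1..k}. i \<noteq> j \<longrightarrow> S i \<inter> S j = {0})"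

definition matroid_bases :: "'a set \<Rightarrow> 'a set set \<Rightarrow> bool" where
  "matroid_bases E \<B> \<longleftrightarrow> finite E \<and> \<B> \<noteq> {} \<and> (\<forall>B\<in>\<B>. B \<subseteq> E) \<and>
     (\<forall>B1\<in>\<B>. \<forall>B2\<in>\<B>. \<forall>x\<in>B1 - B2. \<exists>y\<in>B2 - B1. insert y (B1 - {x}) \<in> \<B>)"

definition indep_of_bases :: "'a set set \<Rightarrow> 'a set \<Rightarrow> bool" where
  "indep_of_bases \<B> X \<longleftrightarrow> (\<exists>B\<in>\<B>. X \<subseteq> B)"

definition circuit_of_bases :: "'a set \<Rightarrow> 'a set set \<Rightarrow> 'a set \<Rightarrow> bool" where
  "circuit_of_bases E \<B> C \<longleftrightarrow> C \<subseteq> E \<and> \<not> indep_of_bases \<B> C \<and>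
     (\<forall>Y. Y \<subset> C \<longrightarrow> indep_of_bases \<B> Y)"

definition matroid_rank_is :: "'a set set \<Rightarrow> nat \<Rightarrow> bool" where
  "matroid_rank_is \<B> r \<longleftrightarrow> (\<forall>B\<in>\<B>. card B = r)"

definition simple_matroid :: "'a set \<Rightarrow> 'a set set \<Rightarrow> bool" where
  "simple_matroid E \<B> \<longleftrightarrow> (\<forall>C. circuit_of_bases E \<B> C \<longrightarrow> card C \<ge> 3)"

definition translation_invariant :: "'a::ab_group_add set set \<Rightarrow> bool" where
  "translation_invariant \<B> \<longleftrightarrow> (\<forall>B\<in>\<B>. \<forall>a. translate B a \<in> \<B>)"

end

theory Submission
  imports Defs
begin

lemma mem_translate: "(p \<in> translate T a) = (p - a \<in> T)"
  unfolding translate_def by (auto simp: image_iff) (metis diff_add_cancel)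

lemma line_unique:
  assumes dds: "distinct_difference_system k S"
    and i: "i \<in> {1..k}" and j: "j \<in> {1..k}" and pq: "p \<noteq> q"
    and "p \<in> translate (S i) a" "q \<in> translate (S i) a"
    and "p \<in> translate (S j) b" "q \<in> translate (S j) b"
  shows "i = j \<and> a = b"
proof -
  define x y z w where "x = p - a" "y = q - a" "z = p - b" "w = q - b"
  have m: "x \<in> S i" "y \<in> S i" "z \<in> S j" "w \<in> S j"
    using assms(5-8) by (auto simp: mem_translate x_y_z_w_def)
  have "x \<noteq> y" "z \<noteq> w" "x - y = z - w" using pq by (auto simp: x_y_z_w_def)
  with dds i j m have xz: "x = z \<and> y = w" unfolding distinct_difference_system_def by blast
  hence ab: "a = b" by (simp add: x_y_z_w_def)
  show ?thesis
  proof (rule ccontr)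
    assume "\<not> (i = j \<and> a = b)"
    with ab have "i \<noteq> j" by simp
    with dds i j have "S i \<inter> S j = {0}" unfolding distinct_difference_system_def by blast
    with m xz have "x = 0" "y = 0" by auto
    with \<open>x \<noteq> y\<close> show False by simp
  qed
qed

lemma exists_nonzero:
  assumes "card (UNIV :: 'a::{ab_group_add, finite} set) \<ge> 3"
  shows "\<exists>d::'a. d \<noteq> p"
proof (rule ccontr)
  assume "\<not> ?thesis"
  hence "(UNIV::'a set) = {p}" by auto
  hence "card (UNIV::'a set) = card {p}" by (simp only:)
  hence "card (UNIV::'a set) = 1" by simp
  with assms show False by simp
qed

lemma line_not_univ:
  fixes S :: "nat \<Rightarrow> 'a::{ab_group_add, finite} set"
  assumes dds: "distinct_difference_system k S" and i: "i \<in> {1..k}"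
    and c: "card (UNIV :: 'a set) \<ge> 3"
  shows "translate (S i) a \<noteq> UNIV"
proof
  assume "translate (S i) a = UNIV"
  hence U: "t \<in> S i" for t
  proof -
    have "t + a \<in> translate (S i) a" using \<open>translate (S i) a = UNIV\<close> by simp
    thus ?thesis by (simp add: mem_translate)
  qed
  obtain d :: 'a where d: "d \<noteq> 0" using exists_nonzero[OF c] by blast
  have h: "d \<noteq> 0" "d + d \<noteq> d" "d - 0 = (d + d) - d" using d by auto
  have D: "\<forall>x\<in>S i. \<forall>y\<in>S i. \<forall>z\<in>S i. \<forall>w\<in>S i.
        x \<noteq> y \<and> z \<noteq> w \<and> x - y = z - w \<longrightarrow> x = z \<and> y = w"
    using dds i unfolding distinct_difference_system_def by blast
  have "d = d + d" using D[rule_format, OF U U U U, of d 0 "d+d" d] h by blast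
  with d show False by simp
qed

lemma two_in_basis:
  fixes S :: "nat \<Rightarrow> 'a::{ab_group_add, finite} set"
  assumes dds: "distinct_difference_system k S"
    and c: "card (UNIV :: 'a set) \<ge> 3" and pq: "p \<noteq> q"
  shows "\<exists>r. r \<notin> {p,q} \<and> \<not>(\<exists>i\<in>{1..k}. \<exists>a. {p,q,r} \<subseteq> translate (S i) a)"
proof (cases "\<exists>i\<in>{1..k}. \<exists>a. p \<in> translate (S i) a \<and> q \<in> translate (S i) a")
  case True
  then obtain i0 a0 where i0: "i0 \<in> {1..k}" and L: "p \<in> translate (S i0) a0" "q \<in> translate (S i0) a0"
    by blast
  obtain r where r: "r \<notin> translate (S i0) a0" using line_not_univ[OF dds i0 c] by blast
  have "r \<notin> {p,q}" using r L by auto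
  moreover have "\<not>(\<exists>i\<in>{1..k}. \<exists>a. {p,q,r} \<subseteq> translate (S i) a)"
  proof
    assume "\<exists>i\<in>{1..k}. \<exists>a. {p,q,r} \<subseteq> translate (S i) a"
    then obtain j b where j: "j \<in> {1..k}" and s: "{p,q,r} \<subseteq> translate (S j) b" by blast
    have "j = i0 \<and> b = a0" using line_unique[OF dds j i0 pq] s L by auto
    with s r show False by auto
  qed
  ultimately show ?thesis by blast
next
  case False
  have "card {p,q} \<le> 2" by (simp add: card_insert_le_m1)
  hence "(UNIV::'a set) \<noteq> {p,q}" using c by auto
  then obtain r where "r \<notin> {p,q}" by auto
  with False show ?thesis by blast
qed

lemma char_basis:
  "(\<exists>T. T \<subseteq> S i \<and> B = translate T a) = (B \<subseteq> translate (S i) a)"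
proof
  assume "\<exists>T. T \<subseteq> S i \<and> B = translate T a"
  thus "B \<subseteq> translate (S i) a" unfolding translate_def by auto
next
  assume B: "B \<subseteq> translate (S i) a"
  have "(\<lambda>t. t - a) ` B \<subseteq> S i" using B by (auto simp: mem_translate)
  moreover have "B = translate ((\<lambda>t. t - a) ` B) a"
    unfolding translate_def image_image by simp
  ultimately show "\<exists>T. T \<subseteq> S i \<and> B = translate T a" by blast
qed

lemma small_sets:
  fixes C :: "'a::{ab_group_add, finite} set"
  assumes c: "card (UNIV :: 'a set) \<ge> 3" and C: "card C \<le> 2"
  shows "\<exists>p q. p \<noteq> q \<and> C \<subseteq> {p,q}"
proof (cases "card C = 2")
  case True
  then obtain p q where "p \<noteq> q" "C = {p,q}" by (meson card_2_iff)
  thus ?thesis by blast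
next
  case False
  hence "card C \<le> 1" using C by linarith
  then obtain p where p: "C \<subseteq> {p}"
    by (metis card_le_Suc0_iff_eq finite empty_subsetI insert_subsetI singleton_iff subsetI One_nat_def)
  obtain d :: 'a where "d \<noteq> p" using exists_nonzero[OF c] by blast
  thus ?thesis using p by blast
qed

theorem proposition3p24:
  fixes S :: "nat \<Rightarrow> 'a::{ab_group_add, finite} set" and k :: nat
  assumes "card (UNIV :: 'a set) \<ge> 3"
    and "distinct_difference_system k S"
  defines "\<B> \<equiv> {B :: 'a set. card B = 3 \<and>
             \<not> (\<exists>i\<in>{1..k}. \<exists>a. \<exists>T. T \<subseteq> S i \<and> B = translate T a)}"
  shows "matroid_bases UNIV \<B> \<and> matroid_rank_is \<B> 3 \<and> simple_matroid UNIV \<B>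
         \<and> translation_invariant \<B>"
proof -
  note c = assms(1) and dds = assms(2)
  have Bc: "\<B> = {B. card B = 3 \<and> \<not> (\<exists>i\<in>{1..k}. \<exists>a. B \<subseteq> translate (S i) a)}"
    unfolding \<B>_def char_basis by simp
  have two: "\<exists>B\<in>\<B>. {p,q} \<subseteq> B" if pq0: "p \<noteq> q" for p q
  proof -
    obtain r where r: "r \<notin> {p,q}" "\<not>(\<exists>i\<in>{1..k}. \<exists>a. {p,q,r} \<subseteq> translate (S i) a)"
      using two_in_basis[OF dds c pq0] by blast
    have "card {p,q,r} = 3" using r pq0 by auto
    with r have "{p,q,r} \<in> \<B>" unfolding Bc by blast
    thus ?thesis by blast
  qed
  have indep: "indep_of_bases \<B> C" if cC: "card C \<le> 2" for C :: "'a set"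
  proof -
    obtain p q where "p \<noteq> q" "C \<subseteq> {p,q}" using small_sets[OF c cC] by blast
    then obtain B where "B \<in> \<B>" "{p,q} \<subseteq> B" using two by blast
    then show ?thesis using \<open>C \<subseteq> {p,q}\<close> unfolding indep_of_bases_def by blast
  qed
  have ne: "\<B> \<noteq> {}"
    using indep[of "{}"] unfolding indep_of_bases_def by auto
  have exch: "\<exists>y\<in>B2 - B1. insert y (B1 - {x}) \<in> \<B>"
    if B1: "B1 \<in> \<B>" and B2: "B2 \<in> \<B>" and x: "x \<in> B1 - B2" for B1 B2 x
  proof -
    have cB1: "card B1 = 3" and cB2: "card B2 = 3"
      and nB2: "\<not> (\<exists>i\<in>{1..k}. \<exists>a. B2 \<subseteq> translate (S i) a)" using B1 B2 unfolding Bc by auto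
    have "card (B1 - {x}) = 2" using cB1 x by simp
    then have "\<exists>p q. B1 - {x} = {p,q} \<and> p \<noteq> q" by (simp only: card_2_iff)
    then obtain p q where pq: "p \<noteq> q" and P: "B1 - {x} = {p,q}" by blast
    have B1eq: "B1 = {x,p,q}" using P x by auto
    show ?thesis
    proof (cases "\<exists>i\<in>{1..k}. \<exists>a. p \<in> translate (S i) a \<and> q \<in> translate (S i) a")
      case True
      then obtain i0 a0 where i0: "i0 \<in> {1..k}" and L: "p \<in> translate (S i0) a0" "q \<in> translate (S i0) a0"
        by blast
      have "\<exists>y\<in>B2 - B1. y \<notin> translate (S i0) a0"
      proof (rule ccontr)
        assume "\<not> ?thesis"
        hence "\<forall>y\<in>B2. y \<notin> B1 \<longrightarrow> y \<in> translate (S i0) a0" by blast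
        moreover have "\<forall>y\<in>B2. y \<in> B1 \<longrightarrow> y \<in> translate (S i0) a0" using L B1eq x by blast
        ultimately have "B2 \<subseteq> translate (S i0) a0" by blast
        with nB2 i0 show False by blast
      qed
      then obtain y where y: "y \<in> B2 - B1" "y \<notin> translate (S i0) a0" by blast
      have "card (insert y {p,q}) = 3" using y B1eq pq by auto
      moreover have "\<not> (\<exists>i\<in>{1..k}. \<exists>a. insert y {p,q} \<subseteq> translate (S i) a)"
      proof
        assume "\<exists>i\<in>{1..k}. \<exists>a. insert y {p,q} \<subseteq> translate (S i) a"
        then obtain j b where j: "j \<in> {1..k}" and s: "insert y {p,q} \<subseteq> translate (S j) b" by blast
        have "j = i0 \<and> b = a0" using line_unique[OF dds j i0 pq] s L by auto
        with s y show False by auto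
      qed
      ultimately have "insert y (B1 - {x}) \<in> \<B>" unfolding Bc P by blast
      thus ?thesis using y by blast
    next
      case False
      have "\<not> B2 \<subseteq> B1"
      proof
        assume "B2 \<subseteq> B1"
        hence "B2 = B1" using cB1 cB2 by (metis card_subset_eq finite)
        with x show False by simp
      qed
      then obtain y where y: "y \<in> B2 - B1" by blast
      have "card (insert y {p,q}) = 3" using y B1eq pq by auto
      moreover have "\<not> (\<exists>i\<in>{1..k}. \<exists>a. insert y {p,q} \<subseteq> translate (S i) a)"
        using False by auto
      ultimately have "insert y (B1 - {x}) \<in> \<B>" unfolding Bc P by blast
      thus ?thesis using y by blast
    qed
  qed
  have mb: "matroid_bases UNIV \<B>"
    unfolding matroid_bases_def
  proof (intro conjI)
    show "\<forall>B1\<in>\<B>. \<forall>B2\<in>\<B>. \<forall>x\<in>B1 - B2. \<exists>y\<in>B2 - B1. insert y (B1 - {x}) \<in> \<B>"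
      using exch by blast
  qed (use ne in auto)
  have rk: "matroid_rank_is \<B> 3" unfolding matroid_rank_is_def Bc by auto
  have simple: "simple_matroid UNIV \<B>"
    unfolding simple_matroid_def circuit_of_bases_def
  proof (intro allI impI)
    fix C :: "'a set"
    assume "C \<subseteq> UNIV \<and> \<not> indep_of_bases \<B> C \<and> (\<forall>Y. Y \<subset> C \<longrightarrow> indep_of_bases \<B> Y)"
    hence "\<not> indep_of_bases \<B> C" by blast
    thus "3 \<le> card C" using indep[of C] by linarith
  qed
  have ti: "translation_invariant \<B>"
    unfolding translation_invariant_def
  proof (intro ballI allI)
    fix B c0 assume B: "B \<in> \<B>"
    have cB: "card B = 3" and nB: "\<not> (\<exists>i\<in>{1..k}. \<exists>a. B \<subseteq> translate (S i) a)"
      using B unfolding Bc by auto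
    have "card (translate B c0) = 3" unfolding translate_def
      using cB by (simp add: card_image inj_on_def)
    moreover have "\<not> (\<exists>i\<in>{1..k}. \<exists>a. translate B c0 \<subseteq> translate (S i) a)"
    proof
      assume "\<exists>i\<in>{1..k}. \<exists>a. translate B c0 \<subseteq> translate (S i) a"
      then obtain i a where i: "i \<in> {1..k}" and s: "translate B c0 \<subseteq> translate (S i) a" by blast
      have "B \<subseteq> translate (S i) (a - c0)"
      proof
        fix b assume "b \<in> B"
        hence "b + c0 \<in> translate (S i) a" using s unfolding translate_def by auto
        thus "b \<in> translate (S i) (a - c0)" by (simp add: mem_translate algebra_simps)
      qed
      with nB i show False by blast
    qed
    ultimately show "translate B c0 \<in> \<B>" unfolding Bc by blast
  qed
  show ?thesis using mb rk simple ti by blast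
qed

end
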